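(* Let $X$ be a real Hilbert space, let $\alpha_1,\alpha_2\in\left]-\infty,1\right[$, let $\beta_1,\beta_2\ge0$, and suppose $\alpha_2(\alpha_2-1)\le\beta_2^2$. Set $$\delta_1=\tfrac{\alpha_1}{1-\alpha_1}\Big(1-\tfrac{(1-\alpha_2)^2-\beta_2^2}{1-\alpha_2}\Big),\quad \delta_2=\tfrac{\alpha_2}{1-\alpha_2},$$ $$\delta_3=1-\Big(\tfrac{(1-\alpha_1)^2-\beta_1^2}{1-\alpha_1}\Big(1-\tfrac{(1-\alpha_2)^2-\beta_2^2}{1-\alpha_2}\Big)+\tfrac{(1-\alpha_2)^2-\beta_2^2}{1-\alpha_2}\Big).$$ Suppose $R_1\colon X\to X$ admits an $(\alpha_1,\beta_1)$-I-N decomposition and $R_2\colon X\to X$ admits an $(\alpha_2,\beta_2)$-I-N decomposition. Then for all $x,y\in X$, $$\|R_2R_1x-R_2R_1y\|^2+\delta_1\|(\mathrm{Id}-R_1)x-(\mathrm{Id}-R_1)y\|^2+\delta_2\|(\mathrm{Id}-R_2)R_1x-(\mathrm{Id}-R_2)R_1y\|^2\le\delta_3\|x-y\|^2.$$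
   Context: For $(\alpha,\beta)\in\mathbb{R}\times[0,\infty[$, an operator $R\colon X\to X$ admits an $(\alpha,\beta)$-I-N (Identity-Nonexpansive) decomposition if there exists a nonexpansive ($1$-Lipschitz) $N\colon X\to X$ with $R=\alpha\mathrm{Id}+\beta N$. *)

theory Defs
  imports "HOL-Analysis.Analysis"
begin

definition nonexpansive :: "('a::real_normed_vector \<Rightarrow> 'a) \<Rightarrow> bool" where
  "nonexpansive N \<longleftrightarrow> (\<forall>x y. norm (N x - N y) \<le> norm (x - y))"

definition IN_decomposition :: "real \<Rightarrow> real \<Rightarrow> ('a::real_normed_vector \<Rightarrow> 'a) \<Rightarrow> bool" where
  "IN_decomposition \<alpha> \<beta> R \<longleftrightarrow> (\<exists>N. nonexpansive N \<and> (\<forall>x. R x = \<alpha> *\<^sub>R x + \<beta> *\<^sub>R N x))"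

end

theory Submission
  imports Defs
begin

lemma key_real:
  fixes R U I a b :: real
  assumes "a < 1" "R - 2*a*I + a^2*U \<le> b^2*U"
  shows "R + a/(1-a) * (U - 2*I + R) \<le> (a - a^2 + b^2)/(1-a) * U"
proof -
  have p: "1 - a > 0" using assms by simp
  have "(1-a) * (R + a/(1-a) * (U - 2*I + R)) = R - 2*a*I + a*U"
    using p by (simp add: field_simps)
  also have "\<dots> \<le> (a - a^2 + b^2) * U" using assms(2) by (simp add: power2_eq_square algebra_simps)
  also have "\<dots> = (1-a) * ((a - a^2 + b^2)/(1-a) * U)" using p by (simp add: field_simps)
  finally show ?thesis using p by (simp add: mult_le_cancel_left_pos del: times_divide_eq_right)
qed

lemma key:
  fixes u r :: "'a::real_inner"
  assumes "a < 1" "b \<ge> 0" "norm (r - a *\<^sub>R u) \<le> b * norm u"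
  shows "norm r ^2 + a/(1-a) * norm (u - r)^2 \<le> (a - a^2 + b^2)/(1-a) * norm u ^2"
proof -
  have "norm (r - a *\<^sub>R u)^2 \<le> (b * norm u)^2"
    using assms by (simp add: power_mono)
  moreover have "norm (r - a *\<^sub>R u)^2 = norm r^2 - 2*a*(inner r u) + a^2 * norm u^2"
    unfolding power2_norm_eq_inner by (simp add: inner_diff_left inner_diff_right inner_commute power2_eq_square algebra_simps)
  moreover have "norm (u - r)^2 = norm u^2 - 2*(inner r u) + norm r^2"
    by (simp add: power2_norm_eq_inner inner_diff_left inner_diff_right inner_commute algebra_simps)
  ultimately show ?thesis using key_real[OF assms(1), of "norm r^2" "inner r u" "norm u^2" b]
    by (simp add: power_mult_distrib)
qed

lemma INdiff:
  assumes "IN_decomposition a b R" "b \<ge> 0"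
  shows "norm ((R x - R y) - a *\<^sub>R (x - y)) \<le> b * norm (x - y)"
proof -
  obtain N where N: "nonexpansive N" "\<And>x. R x = a *\<^sub>R x + b *\<^sub>R N x"
    using assms unfolding IN_decomposition_def by blast
  have "(R x - R y) - a *\<^sub>R (x - y) = b *\<^sub>R (N x - N y)"
    using N(2) by (simp add: algebra_simps)
  then have "norm ((R x - R y) - a *\<^sub>R (x - y)) = b * norm (N x - N y)"
    using assms(2) by simp
  also have "\<dots> \<le> b * norm (x - y)"
    using N(1) assms(2) unfolding nonexpansive_def by (simp add: mult_left_mono)
  finally show ?thesis .
qed

theorem mainTheorem5:
  fixes R1 R2 :: "'a::{real_inner, complete_space} \<Rightarrow> 'a"
    and \<alpha>1 \<alpha>2 \<beta>1 \<beta>2 \<delta>1 \<delta>2 \<delta>3 :: real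
  assumes "\<alpha>1 < 1" and "\<alpha>2 < 1" and "\<beta>1 \<ge> 0" and "\<beta>2 \<ge> 0"
    and "\<alpha>2 * (\<alpha>2 - 1) \<le> \<beta>2 ^ 2"
    and "\<delta>1 = \<alpha>1 / (1 - \<alpha>1) * (1 - ((1 - \<alpha>2)^2 - \<beta>2^2) / (1 - \<alpha>2))"
    and "\<delta>2 = \<alpha>2 / (1 - \<alpha>2)"
    and "\<delta>3 = 1 - (((1 - \<alpha>1)^2 - \<beta>1^2) / (1 - \<alpha>1) * (1 - ((1 - \<alpha>2)^2 - \<beta>2^2) / (1 - \<alpha>2))
                    + ((1 - \<alpha>2)^2 - \<beta>2^2) / (1 - \<alpha>2))"
    and "IN_decomposition \<alpha>1 \<beta>1 R1"
    and "IN_decomposition \<alpha>2 \<beta>2 R2"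
  shows "norm (R2 (R1 x) - R2 (R1 y))^2
         + \<delta>1 * norm ((x - R1 x) - (y - R1 y))^2
         + \<delta>2 * norm ((R1 x - R2 (R1 x)) - (R1 y - R2 (R1 y)))^2
         \<le> \<delta>3 * norm (x - y)^2"
proof -
  define c1 where "c1 = (\<alpha>1 - \<alpha>1^2 + \<beta>1^2)/(1-\<alpha>1)"
  define c2 where "c2 = (\<alpha>2 - \<alpha>2^2 + \<beta>2^2)/(1-\<alpha>2)"
  have c1e: "1 - ((1 - \<alpha>1)^2 - \<beta>1^2) / (1 - \<alpha>1) = c1"
    using assms(1) unfolding c1_def by (simp add: field_simps power2_eq_square)
  have c2e: "1 - ((1 - \<alpha>2)^2 - \<beta>2^2) / (1 - \<alpha>2) = c2"
    using assms(2) unfolding c2_def by (simp add: field_simps power2_eq_square)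
  have c2pos: "c2 \<ge> 0" unfolding c2_def using assms(2,5)
    by (intro divide_nonneg_pos) (auto simp: power2_eq_square algebra_simps)
  have d1: "\<delta>1 = \<alpha>1/(1-\<alpha>1) * c2" using assms(6) c2e by simp
  have d3: "\<delta>3 = c1 * c2"
  proof -
    have q1: "((1 - \<alpha>1)^2 - \<beta>1^2) / (1 - \<alpha>1) = 1 - c1" using c1e by linarith
    have q2: "((1 - \<alpha>2)^2 - \<beta>2^2) / (1 - \<alpha>2) = 1 - c2" using c2e by linarith
    have "\<delta>3 = 1 - ((1 - c1) * (1 - (1 - c2)) + (1 - c2))" using assms(8) unfolding q1 q2 .
    then show ?thesis by (simp add: algebra_simps)
  qed
  let ?u = "x - y" let ?r1 = "R1 x - R1 y" let ?r2 = "R2 (R1 x) - R2 (R1 y)"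
  have s1: "norm ?r1 ^2 + \<alpha>1/(1-\<alpha>1) * norm (?u - ?r1)^2 \<le> c1 * norm ?u ^2"
    unfolding c1_def by (rule key[OF assms(1,3) INdiff[OF assms(9,3)]])
  have s2: "norm ?r2 ^2 + \<alpha>2/(1-\<alpha>2) * norm (?r1 - ?r2)^2 \<le> c2 * norm ?r1 ^2"
    unfolding c2_def by (rule key[OF assms(2,4) INdiff[OF assms(10,4)]])
  have s1': "c2 * norm ?r1 ^2 + c2 * (\<alpha>1/(1-\<alpha>1)) * norm (?u - ?r1)^2 \<le> c2 * (c1 * norm ?u ^2)"
    using mult_left_mono[OF s1 c2pos] by (simp add: algebra_simps)
  have e1: "(x - R1 x) - (y - R1 y) = ?u - ?r1" by (simp add: algebra_simps)
  have e2: "(R1 x - R2 (R1 x)) - (R1 y - R2 (R1 y)) = ?r1 - ?r2" by (simp add: algebra_simps)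
  show ?thesis unfolding e1 e2 d1 d3 assms(7) using s1' s2 by (simp add: algebra_simps)
qed

end
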